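(* Let $k\ge 2$. Let $G$ be a finite simple graph admitting a closed neighborhood balanced $k$-coloring $c$ with $|c^{-1}(1)|=\dots=|c^{-1}(k)|$, and let $H$ be a finite simple graph admitting a closed neighborhood balanced $k$-coloring $c'$ with $|c'^{-1}(1)|=\dots=|c'^{-1}(k)|$. Then the join $G\vee H$ admits a closed neighborhood balanced $k$-coloring.
   Context: For a vertex $v$, $N[v]=\{v\}\cup\{u : uv\in E\}$. A closed neighborhood balanced $k$-coloring of a graph is a map $c: V\to\{1,\dots,k\}$ such that for every vertex $v$ the numbers $|\{u\in N[v] : c(u)=i\}|$, $i=1,\dots,k$, are all equal. The join $G\vee H$ of vertex-disjoint graphs has vertex set $V(G)\cup V(H)$ and edge set $E(G)\cup E(H)\cup\{gh: g\in V(G), h\in V(H)\}$. *)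

theory Defs
  imports Main
begin

definition simple_graph :: "'a set \<Rightarrow> 'a set set \<Rightarrow> bool" where
  "simple_graph V E \<longleftrightarrow> finite V \<and> (\<forall>e\<in>E. e \<subseteq> V \<and> card e = 2)"

definition closed_nbhd :: "'a set set \<Rightarrow> 'a \<Rightarrow> 'a set" where
  "closed_nbhd E v = {v} \<union> {u. {u, v} \<in> E}"

definition cnb_coloring :: "'a set \<Rightarrow> 'a set set \<Rightarrow> nat \<Rightarrow> ('a \<Rightarrow> nat) \<Rightarrow> bool" where
  "cnb_coloring V E k c \<longleftrightarrow>
     (\<forall>v\<in>V. c v \<in> {1..k}) \<and>
     (\<forall>v\<in>V. \<forall>i\<in>{1..k}. \<forall>j\<in>{1..k}.
        card {u\<in>closed_nbhd E v. c u = i} = card {u\<in>closed_nbhd E v. c u = j})"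

definition join_vertices :: "'a set \<Rightarrow> 'b set \<Rightarrow> ('a + 'b) set" where
  "join_vertices V1 V2 = Inl ` V1 \<union> Inr ` V2"

definition join_edges :: "'a set \<Rightarrow> 'a set set \<Rightarrow> 'b set \<Rightarrow> 'b set set \<Rightarrow> ('a + 'b) set set" where
  "join_edges V1 E1 V2 E2 =
     (image Inl) ` E1 \<union> (image Inr) ` E2 \<union> {{Inl g, Inr h} | g h. g \<in> V1 \<and> h \<in> V2}"

end

theory Submission
  imports Defs
begin

lemma card_sum_split:
  fixes A :: "'a set" and B :: "'b set" and c :: "'a \<Rightarrow> nat" and c' :: "'b \<Rightarrow> nat"
  assumes "finite A" "finite B"
  shows "card {x \<in> Inl ` A \<union> Inr ` B. case_sum c c' x = i}
       = card {a\<in>A. c a = i} + card {b\<in>B. c' b = i}"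
proof -
  have "{x \<in> Inl ` A \<union> Inr ` B. case_sum c c' x = i}
      = Inl ` {a\<in>A. c a = i} \<union> Inr ` {b\<in>B. c' b = i}" by auto
  moreover have "card (Inl ` {a\<in>A. c a = i} \<union> Inr ` {b\<in>B. c' b = i})
      = card (Inl ` {a\<in>A. c a = i} :: ('a + 'b) set) + card (Inr ` {b\<in>B. c' b = i} :: ('a + 'b) set)"
    using assms by (intro card_Un_disjoint) auto
  moreover have "card (Inl ` {a\<in>A. c a = i} :: ('a + 'b) set) = card {a\<in>A. c a = i}"
    by (rule card_image) (simp add: inj_on_def)
  moreover have "card (Inr ` {b\<in>B. c' b = i} :: ('a + 'b) set) = card {b\<in>B. c' b = i}"
    by (rule card_image) (simp add: inj_on_def)
  ultimately show ?thesis by simp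
qed

lemma nbhd_fin:
  assumes "simple_graph V E" "v \<in> V"
  shows "finite (closed_nbhd E v)"
proof -
  have "closed_nbhd E v \<subseteq> V" using assms unfolding closed_nbhd_def simple_graph_def by auto
  thus ?thesis using assms unfolding simple_graph_def by (meson finite_subset)
qed

lemma nbhd_Inl:
  assumes "v \<in> V1"
  shows "closed_nbhd (join_edges V1 E1 V2 E2) (Inl v) = Inl ` closed_nbhd E1 v \<union> Inr ` V2"
proof (rule set_eqI)
  fix x
  show "x \<in> closed_nbhd (join_edges V1 E1 V2 E2) (Inl v) \<longleftrightarrow> x \<in> Inl ` closed_nbhd E1 v \<union> Inr ` V2"
  proof (cases x)
    case (Inl u)
    have A: "{Inl u, Inl v} \<in> image Inl ` E1 \<longleftrightarrow> {u, v} \<in> E1"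
    proof
      assume "{Inl u, Inl v} \<in> image Inl ` E1"
      then obtain e where "e \<in> E1" "{Inl u, Inl v} = Inl ` e" by blast
      note arg_cong[OF this(2), of "vimage Inl"]
      hence "e = {u, v}" by auto
      thus "{u, v} \<in> E1" using \<open>e \<in> E1\<close> by simp
    next
      assume "{u, v} \<in> E1"
      moreover have "{Inl u, Inl v} = Inl ` {u, v}" by simp
      ultimately show "{Inl u, Inl v} \<in> image Inl ` E1" by blast
    qed
    have B: "{Inl u, Inl v} \<notin> image Inr ` E2" by blast
    have C: "{Inl u, Inl v} \<notin> {{Inl g, Inr h} | g h. g \<in> V1 \<and> h \<in> V2}"
      by (auto simp: doubleton_eq_iff)
    have "x \<in> closed_nbhd (join_edges V1 E1 V2 E2) (Inl v) \<longleftrightarrow> u = v \<or> {u, v} \<in> E1"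
      using A B C Inl unfolding closed_nbhd_def join_edges_def by blast
    also have "\<dots> \<longleftrightarrow> x \<in> Inl ` closed_nbhd E1 v \<union> Inr ` V2"
      using Inl unfolding closed_nbhd_def by blast
    finally show ?thesis .
  next
    case (Inr w)
    have A: "{Inr w, Inl v} \<notin> image Inl ` E1" by blast
    have B: "{Inr w, Inl v} \<notin> image Inr ` E2" by blast
    have C: "{Inr w, Inl v} \<in> {{Inl g, Inr h} | g h. g \<in> V1 \<and> h \<in> V2} \<longleftrightarrow> w \<in> V2"
      using assms by (auto simp: doubleton_eq_iff)
    have "x \<in> closed_nbhd (join_edges V1 E1 V2 E2) (Inl v) \<longleftrightarrow> w \<in> V2"
      using A B C Inr unfolding closed_nbhd_def join_edges_def by blast
    also have "\<dots> \<longleftrightarrow> x \<in> Inl ` closed_nbhd E1 v \<union> Inr ` V2"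
      using Inr by blast
    finally show ?thesis .
  qed
qed

lemma nbhd_Inr:
  assumes "v \<in> V2"
  shows "closed_nbhd (join_edges V1 E1 V2 E2) (Inr v) = Inl ` V1 \<union> Inr ` closed_nbhd E2 v"
proof (rule set_eqI)
  fix x
  show "x \<in> closed_nbhd (join_edges V1 E1 V2 E2) (Inr v) \<longleftrightarrow> x \<in> Inl ` V1 \<union> Inr ` closed_nbhd E2 v"
  proof (cases x)
    case (Inr u)
    have A: "{Inr u, Inr v} \<in> image Inr ` E2 \<longleftrightarrow> {u, v} \<in> E2"
    proof
      assume "{Inr u, Inr v} \<in> image Inr ` E2"
      then obtain e where "e \<in> E2" "{Inr u, Inr v} = Inr ` e" by blast
      note arg_cong[OF this(2), of "vimage Inr"]
      hence "e = {u, v}" by auto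
      thus "{u, v} \<in> E2" using \<open>e \<in> E2\<close> by simp
    next
      assume "{u, v} \<in> E2"
      moreover have "{Inr u, Inr v} = Inr ` {u, v}" by simp
      ultimately show "{Inr u, Inr v} \<in> image Inr ` E2" by blast
    qed
    have B: "{Inr u, Inr v} \<notin> image Inl ` E1" by blast
    have C: "{Inr u, Inr v} \<notin> {{Inl g, Inr h} | g h. g \<in> V1 \<and> h \<in> V2}"
      by (auto simp: doubleton_eq_iff)
    have "x \<in> closed_nbhd (join_edges V1 E1 V2 E2) (Inr v) \<longleftrightarrow> u = v \<or> {u, v} \<in> E2"
      using A B C Inr unfolding closed_nbhd_def join_edges_def by blast
    also have "\<dots> \<longleftrightarrow> x \<in> Inl ` V1 \<union> Inr ` closed_nbhd E2 v"
      using Inr unfolding closed_nbhd_def by blast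
    finally show ?thesis .
  next
    case (Inl w)
    have A: "{Inl w, Inr v} \<notin> image Inr ` E2" by blast
    have B: "{Inl w, Inr v} \<notin> image Inl ` E1" by blast
    have C: "{Inl w, Inr v} \<in> {{Inl g, Inr h} | g h. g \<in> V1 \<and> h \<in> V2} \<longleftrightarrow> w \<in> V1"
      using assms by (auto simp: doubleton_eq_iff)
    have "x \<in> closed_nbhd (join_edges V1 E1 V2 E2) (Inr v) \<longleftrightarrow> w \<in> V1"
      using A B C Inl unfolding closed_nbhd_def join_edges_def by blast
    also have "\<dots> \<longleftrightarrow> x \<in> Inl ` V1 \<union> Inr ` closed_nbhd E2 v"
      using Inl by blast
    finally show ?thesis .
  qed
qed

theorem theorem2p22:
  fixes V1 :: "'a set" and E1 :: "'a set set" and V2 :: "'b set" and E2 :: "'b set set"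
    and k :: nat and c :: "'a \<Rightarrow> nat" and c' :: "'b \<Rightarrow> nat"
  assumes "k \<ge> 2"
    and "simple_graph V1 E1" and "simple_graph V2 E2"
    and "cnb_coloring V1 E1 k c"
    and "\<forall>i\<in>{1..k}. \<forall>j\<in>{1..k}. card {v\<in>V1. c v = i} = card {v\<in>V1. c v = j}"
    and "cnb_coloring V2 E2 k c'"
    and "\<forall>i\<in>{1..k}. \<forall>j\<in>{1..k}. card {v\<in>V2. c' v = i} = card {v\<in>V2. c' v = j}"
  shows "\<exists>d. cnb_coloring (join_vertices V1 V2) (join_edges V1 E1 V2 E2) k d"
proof
  have f1: "finite V1" and f2: "finite V2" using assms(2,3) by (auto simp: simple_graph_def)
  show "cnb_coloring (join_vertices V1 V2) (join_edges V1 E1 V2 E2) k (case_sum c c')"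
    unfolding cnb_coloring_def
  proof (intro conjI ballI)
    fix x assume "x \<in> join_vertices V1 V2"
    then consider (l) v where "x = Inl v" "v \<in> V1" | (r) v where "x = Inr v" "v \<in> V2"
      unfolding join_vertices_def by blast
    then show "case_sum c c' x \<in> {1..k}"
    proof cases
      case l then show ?thesis using assms(4) unfolding cnb_coloring_def by simp
    next
      case r then show ?thesis using assms(6) unfolding cnb_coloring_def by simp
    qed
  next
    fix x i j assume x: "x \<in> join_vertices V1 V2" and i: "i \<in> {1..k}" and j: "j \<in> {1..k}"
    show "card {u \<in> closed_nbhd (join_edges V1 E1 V2 E2) x. case_sum c c' u = i} =
          card {u \<in> closed_nbhd (join_edges V1 E1 V2 E2) x. case_sum c c' u = j}"
    proof (cases x)
      case (Inl v)
      hence v: "v \<in> V1" using x by (auto simp: join_vertices_def)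
      have fn: "finite (closed_nbhd E1 v)" using nbhd_fin[OF assms(2) v] .
      have h1: "card {a\<in>closed_nbhd E1 v. c a = i} = card {a\<in>closed_nbhd E1 v. c a = j}"
        using assms(4) i j v unfolding cnb_coloring_def by blast
      have h2: "card {a\<in>V2. c' a = i} = card {a\<in>V2. c' a = j}"
        using assms(7) i j by blast
      show ?thesis unfolding Inl nbhd_Inl[OF v] card_sum_split[OF fn f2] h1 h2 ..
    next
      case (Inr v)
      hence v: "v \<in> V2" using x by (auto simp: join_vertices_def)
      have fn: "finite (closed_nbhd E2 v)" using nbhd_fin[OF assms(3) v] .
      have h1: "card {a\<in>closed_nbhd E2 v. c' a = i} = card {a\<in>closed_nbhd E2 v. c' a = j}"
        using assms(6) i j v unfolding cnb_coloring_def by blast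
      have h2: "card {a\<in>V1. c a = i} = card {a\<in>V1. c a = j}"
        using assms(5) i j by blast
      show ?thesis unfolding Inr nbhd_Inr[OF v] card_sum_split[OF f1 fn] h1 h2 ..
    qed
  qed
qed

end
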